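(* Let $\{A_k\}_{k\ge0}$ be a sequence of nonnegative reals with $A_0=0$ and $A_k=A_{k-1}+\sqrt{c_1^2+c_2A_{k-1}}$ for $k\ge1$, where $c_1>0$ and $c_2\ge0$. Let $K_0=\lceil\frac{c_2}{9c_1}\rceil$. Then $$A_k\ge\begin{cases}\frac{c_2}{9}\Big(k-K_0+\max\Big\{3\sqrt{\frac{c_1}{c_2}},1\Big\}\Big)^2,&\text{if }c_2>0\text{ and }k>K_0,\\ c_1k,&\text{otherwise.}\end{cases}$$ *)

theory Defs
  imports Complex_Main
begin

end

theory Submission
  imports Defs
begin

theorem lemma6:
  fixes A :: "nat \<Rightarrow> real" and c1 c2 :: real and k :: nat
  assumes nonneg: "\<And>j. A j \<ge> 0"
    and A0: "A 0 = 0"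
    and rec: "\<And>j. j \<ge> 1 \<Longrightarrow> A j = A (j - 1) + sqrt (c1^2 + c2 * A (j - 1))"
    and c1: "c1 > 0" and c2: "c2 \<ge> 0"
  defines "K0 \<equiv> \<lceil>c2 / (9 * c1)\<rceil>"
  shows "A k \<ge> (if c2 > 0 \<and> int k > K0
                 then c2 / 9 * (real k - real_of_int K0 + max (3 * sqrt (c1 / c2)) 1)^2
                 else c1 * real k)"
proof -
  have recS: "A (Suc j) = A j + sqrt (c1^2 + c2 * A j)" for j
    using rec[of "Suc j"] by simp
  have lin: "A n \<ge> c1 * real n" for n
  proof (induction n)
    case 0 then show ?case using A0 by simp
  next
    case (Suc n)
    have "sqrt (c1^2 + c2 * A n) \<ge> sqrt (c1^2)"
      using c2 nonneg[of n] by (intro real_sqrt_le_mono) simp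
    then have "sqrt (c1^2 + c2 * A n) \<ge> c1" using c1 by simp
    then show ?case using Suc recS[of n] by (simp add: distrib_left)
  qed
  show ?thesis
  proof (cases "c2 > 0 \<and> int k > K0")
    case False then show ?thesis using lin[of k] by (simp only: if_False)
  next
    case True
    then have c2p: "c2 > 0" by simp
    define m where "m = max (3 * sqrt (c1 / c2)) 1"
    define K where "K = nat K0"
    have K0pos: "K0 \<ge> 1" unfolding K0_def using c1 c2p by simp
    have KK: "real K = real_of_int K0" unfolding K_def using K0pos by simp
    have m1: "m \<ge> 1" unfolding m_def by simp
    have main: "A (K + i) \<ge> c2 / 9 * (real i + m)^2" for i
    proof (induction i)
      case 0
      have aK: "A K \<ge> c1 * real K" by (rule lin)
      have "real K \<ge> 1" using KK K0pos by simp
      then have a1: "A K \<ge> c1" using aK c1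
        by (metis mult.right_neutral mult_left_mono order_trans less_imp_le)
      have "real K \<ge> c2 / (9 * c1)" using KK K0_def by simp
      then have "c1 * real K \<ge> c1 * (c2 / (9 * c1))" using c1 by (intro mult_left_mono) auto
      then have a2: "A K \<ge> c2 / 9" using aK c1 by simp
      show ?case
      proof (cases "3 * sqrt (c1 / c2) \<ge> 1")
        case True
        then have "m = 3 * sqrt (c1 / c2)" unfolding m_def by simp
        then have "m^2 = 9 * (c1 / c2)" using c1 c2p by (simp add: power_mult_distrib)
        then have "c2 / 9 * m^2 = c1" using c2p by simp
        then show ?thesis using a1 by simp
      next
        case False
        then have "m = 1" unfolding m_def by simp
        then show ?thesis using a2 by simp
      qed
    next
      case (Suc i)
      define x where "x = real i + m"
      have x1: "x \<ge> 1" unfolding x_def using m1 by simp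
      define y where "y = c2 / 9 * x^2"
      have IH: "A (K + i) \<ge> y" using Suc unfolding y_def x_def .
      have s1: "sqrt (c1^2 + c2 * y) \<le> sqrt (c1^2 + c2 * A (K + i))"
        using IH c2 by (intro real_sqrt_le_mono) (simp add: mult_left_mono)
      moreover have s2: "c2 * (2 * x + 1) / 9 \<le> sqrt (c1^2 + c2 * y)"
      proof (rule real_le_rsqrt)
        have "(5*x+1)*(x-1) \<ge> 0" using x1 by simp
        then have "c2^2 * ((5*x+1)*(x-1)) \<ge> 0" by simp
        moreover have cc: "c1 * (c1 * 81) \<ge> 0" by simp
        ultimately show "(c2 * (2 * x + 1) / 9)^2 \<le> c1^2 + c2 * y"
          unfolding y_def apply (simp add: power2_eq_square algebra_simps) using cc by linarith
      qed
      ultimately have "A (K + Suc i) \<ge> y + c2 * (2 * x + 1) / 9"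
        using IH recS[of "K + i"] s1 s2 by (simp only: add_Suc_right)
      moreover have "y + c2 * (2 * x + 1) / 9 = c2 / 9 * (real (Suc i) + m)^2"
        unfolding y_def x_def by (simp add: power2_eq_square algebra_simps)
      ultimately show ?case by simp
    qed
    have "k \<ge> K" using True K_def by linarith
    then obtain i where ki: "k = K + i" using le_Suc_ex by blast
    have "real k - real_of_int K0 = real i" using ki KK by simp
    then show ?thesis using True main[of i] ki unfolding m_def by simp
  qed
qed

end
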